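(* Let $(X_1,\dots,X_d,Y)$ follow a structural equation model with causal DAG $G$ in which $Y$ is a sink node and $Y=f^*(X)+\varepsilon$ with $\mathbb{E}[\varepsilon]=0$, $\varepsilon$ independent of $X$, where $f^*$ depends on $X$ only through $X_{\mathrm{pa}(Y)}$. Let $\mathcal{I}\subseteq\{1,\dots,d\}$ satisfy $$\mathrm{pa}(Y)\subseteq\mathcal{I}\cup\mathrm{desc}(\mathcal{I})^C.$$ Then for every covariate-fixing transformation $T_{\mathcal{I}\to z}$, $$\mathbb{E}_X\big[f^*(T_{\mathcal{I}\to z}(X))-f^*(X)\big]=\mathbb{E}_{\widetilde X\sim do(X_{\mathcal{I}}=z_{\mathcal{I}})}\big[f^*(\widetilde X)\big]-\mathbb{E}_X\big[f^*(X)\big].$$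
   Context: $\mathrm{pa}(Y)$ is the set of parents of $Y$ in $G$; $\mathrm{desc}(\mathcal{I})$ is the set of covariates that are descendants in $G$ of at least one variable in $\mathcal{I}$, and $A^C$ denotes complement in $\{1,\dots,d\}$. For $\mathcal{I}$ and $z\in\mathbb{R}^d$, the covariate-fixing transformation is $T_{\mathcal{I}\to z}(x)_j=z_j$ for $j\in\mathcal{I}$ and $T_{\mathcal{I}\to z}(x)_j=x_j$ for $j\notin\mathcal{I}$. $\mathbb{E}_X$ is expectation under the observational (pre-intervention) distribution of $X$; $do(X_{\mathcal{I}}=z_{\mathcal{I}})$ denotes the interventional distribution of the covariates in the SEM obtained by Pearl's do-operation setting the variables in $\mathcal{I}$ to $z_{\mathcal{I}}$ (other variables, including descendants of $\mathcal{I}$, are generated by their structural equations). *)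

theory Defs
  imports "HOL-Probability.Probability"
begin

text \<open>Covariates are indexed by {1..d}; a covariate vector is a function nat => real
  (values outside {1..d} are irrelevant).\<close>

definition fix_cov :: "nat set \<Rightarrow> (nat \<Rightarrow> real) \<Rightarrow> (nat \<Rightarrow> real) \<Rightarrow> (nat \<Rightarrow> real)" where
  "fix_cov I z x = (\<lambda>j. if j \<in> I then z j else x j)"

text \<open>Edges k -> j of the causal DAG restricted to the covariates (Y is a sink, so it is
  never a parent of a covariate).\<close>
definition dag_edges :: "nat \<Rightarrow> (nat \<Rightarrow> nat set) \<Rightarrow> (nat \<times> nat) set" where
  "dag_edges d pa = {(k, j). j \<in> {1..d} \<and> k \<in> pa j}"

definition is_dag :: "nat \<Rightarrow> (nat \<Rightarrow> nat set) \<Rightarrow> bool" where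
  "is_dag d pa \<longleftrightarrow> (\<forall>j\<in>{1..d}. pa j \<subseteq> {1..d}) \<and> acyclic (dag_edges d pa)"

definition desc :: "nat \<Rightarrow> (nat \<Rightarrow> nat set) \<Rightarrow> nat set \<Rightarrow> nat set" where
  "desc d pa I = {k. \<exists>i\<in>I. (i, k) \<in> (dag_edges d pa)\<^sup>+}"

text \<open>The covariate vector generated by the SEM with structural assignments g and noise
  realisation e, after the do-intervention setting the variables in I to z
  (I = {} gives the observational SEM).\<close>
definition sem_solution ::
  "nat \<Rightarrow> nat set \<Rightarrow> (nat \<Rightarrow> real) \<Rightarrow> (nat \<Rightarrow> (nat \<Rightarrow> real) \<Rightarrow> 'n \<Rightarrow> real) \<Rightarrow> (nat \<Rightarrow> 'n) \<Rightarrow> (nat \<Rightarrow> real)"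
  where
  "sem_solution d I z g e = (THE x. (\<forall>j\<in>{1..d}. x j = (if j \<in> I then z j else g j x (e j)))
                                 \<and> (\<forall>j. j \<notin> {1..d} \<longrightarrow> x j = undefined))"

end

theory Submission
  imports Defs
begin

lemma sem_sol_prop:
  fixes g :: "nat \<Rightarrow> (nat \<Rightarrow> real) \<Rightarrow> 'n \<Rightarrow> real"
  assumes wfR: "wf (dag_edges d pa)"
    and g_pa: "\<And>j x x' e. j \<in> {1..d} \<Longrightarrow> (\<forall>k\<in>pa j. x k = x' k) \<Longrightarrow> g j x e = g j x' e"
  shows "(\<forall>j\<in>{1..d}. sem_solution d I z g e j = (if j \<in> I then z j else g j (sem_solution d I z g e) (e j)))
         \<and> (\<forall>j. j \<notin> {1..d} \<longrightarrow> sem_solution d I z g e j = undefined)"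
proof -
  let ?R = "dag_edges d pa"
  let ?P = "\<lambda>x. (\<forall>j\<in>{1..d}. x j = (if j \<in> I then z j else g j x (e j)))
                                 \<and> (\<forall>j. j \<notin> {1..d} \<longrightarrow> x j = undefined)"
  define H where "H = (\<lambda>f j. if j \<in> {1..d} then (if j \<in> I then z j else g j f (e j)) else (undefined::real))"
  define F where "F = wfrec ?R H"
  have pe: "(k, j) \<in> ?R" if "j \<in> {1..d}" "k \<in> pa j" for j k
    using that by (simp add: dag_edges_def)
  have ex: "?P F"
  proof -
    have "F j = (if j \<in> {1..d} then (if j \<in> I then z j else g j F (e j)) else undefined)" for j
    proof -
      have "F j = H (cut F ?R j) j" unfolding F_def by (rule wfrec[OF wfR])
      moreover have "j \<in> {1..d} \<Longrightarrow> g j (cut F ?R j) (e j) = g j F (e j)"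
        by (rule g_pa) (auto simp: cut_apply pe)
      ultimately show ?thesis unfolding H_def by auto
    qed
    then show ?thesis by auto
  qed
  have un: "x = y" if "?P x" "?P y" for x y
  proof
    fix j
    show "x j = y j"
    proof (induction j rule: wf_induct[OF wfR])
      case (1 j)
      show ?case
      proof (cases "j \<in> {1..d}")
        case True
        have "g j x (e j) = g j y (e j)"
          by (rule g_pa[OF True]) (use 1 pe True in blast)
        then show ?thesis using that True by auto
      next
        case False then show ?thesis using that by auto
      qed
    qed
  qed
  have "?P (THE x. ?P x)" by (rule theI[of ?P F]) (use ex un in auto)
  then show ?thesis unfolding sem_solution_def by simp
qed


theorem theorem3:
  fixes M :: "'w measure" and S :: "'n measure" and N :: "nat \<Rightarrow> 'w \<Rightarrow> 'n"
    and d :: nat and pa :: "nat \<Rightarrow> nat set" and paY :: "nat set"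
    and g :: "nat \<Rightarrow> (nat \<Rightarrow> real) \<Rightarrow> 'n \<Rightarrow> real"
    and fstar :: "(nat \<Rightarrow> real) \<Rightarrow> real" and eps :: "'w \<Rightarrow> real"
    and I :: "nat set" and z :: "nat \<Rightarrow> real"
  assumes prob: "prob_space M"
    and noise_indep: "prob_space.indep_vars M (\<lambda>_. S) N {1..d}"
    and dag: "is_dag d pa"
    and g_meas: "\<And>j. j \<in> {1..d} \<Longrightarrow>
          (\<lambda>(x, e). g j x e) \<in> borel_measurable (PiM {1..d} (\<lambda>_. borel) \<Otimes>\<^sub>M S)"
    and g_pa: "\<And>j x x' e. j \<in> {1..d} \<Longrightarrow> (\<forall>k\<in>pa j. x k = x' k) \<Longrightarrow> g j x e = g j x' e"
    and paY_sub: "paY \<subseteq> {1..d}"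
    and f_meas: "fstar \<in> borel_measurable (PiM {1..d} (\<lambda>_. borel))"
    and f_paY: "\<And>x x'. (\<forall>k\<in>paY. x k = x' k) \<Longrightarrow> fstar x = fstar x'"
    and eps_int: "integrable M eps"
    and eps_mean: "(LINT \<omega>|M. eps \<omega>) = 0"
    and eps_indep: "\<forall>A\<in>sets (borel :: real measure). \<forall>B\<in>sets (PiM {1..d} (\<lambda>_. borel)).
          measure M {\<omega>\<in>space M. eps \<omega> \<in> A \<and> sem_solution d {} z g (\<lambda>j. N j \<omega>) \<in> B}
          = measure M {\<omega>\<in>space M. eps \<omega> \<in> A}
            * measure M {\<omega>\<in>space M. sem_solution d {} z g (\<lambda>j. N j \<omega>) \<in> B}"
    and I_sub: "I \<subseteq> {1..d}"
    and adj: "paY \<subseteq> I \<union> ({1..d} - desc d pa I)"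
    and int_obs: "integrable M (\<lambda>\<omega>. fstar (sem_solution d {} z g (\<lambda>j. N j \<omega>)))"
    and int_do: "integrable M (\<lambda>\<omega>. fstar (sem_solution d I z g (\<lambda>j. N j \<omega>)))"
  shows "(LINT \<omega>|M. fstar (fix_cov I z (sem_solution d {} z g (\<lambda>j. N j \<omega>)))
                      - fstar (sem_solution d {} z g (\<lambda>j. N j \<omega>)))
         = (LINT \<omega>|M. fstar (sem_solution d I z g (\<lambda>j. N j \<omega>)))
           - (LINT \<omega>|M. fstar (sem_solution d {} z g (\<lambda>j. N j \<omega>)))"
proof -
  let ?R = "dag_edges d pa"
  have paj: "\<And>j. j \<in> {1..d} \<Longrightarrow> pa j \<subseteq> {1..d}" and acy: "acyclic ?R"
    using dag by (auto simp: is_dag_def)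
  have "?R \<subseteq> {1..d} \<times> {1..d}" using paj by (auto simp: dag_edges_def)
  hence "finite ?R" by (rule finite_subset) simp
  hence wfR: "wf ?R" using acy by (rule finite_acyclic_wf)
  have pe: "(k, j) \<in> ?R" if "j \<in> {1..d}" "k \<in> pa j" for j k
    using that by (simp add: dag_edges_def)
  have key: "fstar (fix_cov I z (sem_solution d {} z g e)) = fstar (sem_solution d I z g e)" for e
  proof -
    let ?x = "sem_solution d {} z g e" and ?y = "sem_solution d I z g e"
    note Px = sem_sol_prop[OF wfR g_pa, where I="{}" and z=z and e=e]
    note Py = sem_sol_prop[OF wfR g_pa, where I=I and z=z and e=e]
    have nd: "j \<in> {1..d} \<longrightarrow> j \<notin> I \<longrightarrow> j \<notin> desc d pa I \<longrightarrow> ?x j = ?y j" for j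
    proof (induction j rule: wf_induct[OF wfR])
      case (1 j)
      show ?case
      proof (intro impI)
        assume j: "j \<in> {1..d}" "j \<notin> I" "j \<notin> desc d pa I"
        have "\<forall>k\<in>pa j. ?x k = ?y k"
        proof
          fix k assume k: "k \<in> pa j"
          have kR: "(k, j) \<in> ?R" using pe[OF j(1) k] .
          have "k \<in> {1..d}" using paj[OF j(1)] k by auto
          moreover have "k \<notin> I"
          proof
            assume "k \<in> I" then have "j \<in> desc d pa I" using kR unfolding desc_def by blast
            then show False using j by simp
          qed
          moreover have "k \<notin> desc d pa I"
          proof
            assume "k \<in> desc d pa I"
            then obtain i where "i \<in> I" "(i, k) \<in> ?R\<^sup>+" unfolding desc_def by blast
            then have "(i, j) \<in> ?R\<^sup>+" using kR by (meson trancl.trancl_into_trancl)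
            then have "j \<in> desc d pa I" using \<open>i \<in> I\<close> unfolding desc_def by blast
            then show False using j by simp
          qed
          ultimately show "?x k = ?y k" using 1 kR by blast
        qed
        hence "g j ?x (e j) = g j ?y (e j)" by (rule g_pa[OF j(1)])
        then show "?x j = ?y j" using Px Py j by auto
      qed
    qed
    have "\<forall>k\<in>paY. fix_cov I z ?x k = ?y k"
    proof
      fix k assume k: "k \<in> paY"
      show "fix_cov I z ?x k = ?y k"
      proof (cases "k \<in> I")
        case True
        then show ?thesis using Py I_sub by (auto simp: fix_cov_def)
      next
        case False
        then have "k \<in> {1..d}" "k \<notin> desc d pa I" using adj k by auto
        then show ?thesis using nd False by (auto simp: fix_cov_def)
      qed
    qed
    then show ?thesis by (rule f_paY)
  qed
  show ?thesis
    unfolding key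
    by (rule Bochner_Integration.integral_diff[OF int_do int_obs])
qed

end
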